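(* Assume $F\in\mathbb C^{n\times n}$ is Hermitian. Define Hermitian matrices $T_k\in\mathbb C^{k\times k}$ recursively by $$T_1=\frac{1+V_1^*FV_1}{2a_1},$$ and, for $k\ge2$, $$T_k=P_k^{-*}\left(\begin{bmatrix}T_{k-1}&0\\0&2a_k\end{bmatrix}+\frac1{2a_k}Q_k^{-*}V_k^*FV_kQ_k^{-1}\right)P_k^{-1},$$ where $$Q_k=\frac{1}{-2a_k}\begin{bmatrix}D_k&0\\ \mathbf 1_{k-1}^T&1\end{bmatrix},\qquad D_k=\operatorname{diag}(\alpha_k-\alpha_1,\dots,\alpha_k-\alpha_{k-1}),$$ and $P_k^{-1}$ is the $k\times k$ matrix $$P_k^{-1}=\begin{bmatrix}\operatorname{diag}\!\Big(\frac{\alpha_1-\alpha_k}{\alpha_1+\bar\alpha_k},\dots,\frac{\alpha_{k-1}-\alpha_k}{\alpha_{k-1}+\bar\alpha_k}\Big)&0\\ \Big(\frac{-1}{\alpha_1+\bar\alpha_k},\dots,\frac{-1}{\alpha_{k-1}+\bar\alpha_k}\Big)&\frac{-1}{2a_k}\end{bmatrix}$$ (with $P_k^{-*}$ its conjugate transpose). Then for every $k\ge1$, $$\Lambda_k^*T_k+T_k\Lambda_k-V_k^*FV_k-\mathbf 1\mathbf 1^*=0,$$ equivalently $T_k(i,j)=\dfrac{1+(V_k^*FV_k)_{ij}}{\bar\alpha_i+\alpha_j}$ for all $1\le i,j\le k$. In particular, the leading $(k-1)\times(k-1)$ principal submatrix of $T_k$ equals $T_{k-1}$.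
   Context: Let $A\in\mathbb C^{n\times n}$ and $C\in\mathbb C^{1\times n}$; $M^*$ denotes the conjugate transpose. Let $\alpha_1,\alpha_2,\dots\in\mathbb C$ be pairwise distinct with $a_j:=\operatorname{Re}(\alpha_j)>0$, and such that $-A^*+\alpha_jI$ is nonsingular for all $j$. Set $$V_k=\big[(-A^*+\alpha_1I)^{-1}C^*,\dots,(-A^*+\alpha_kI)^{-1}C^*\big]\in\mathbb C^{n\times k},$$ $\Lambda_k=\operatorname{diag}(\alpha_1,\dots,\alpha_k)$, and $\mathbf 1=[1,\dots,1]^T\in\mathbb R^k$. *)

theory Defs
  imports "Jordan_Normal_Form.Gauss_Jordan_Elimination" "Jordan_Normal_Form.Schur_Decomposition"
begin

text \<open>Matrix inverse (meaningful for invertible square matrices).\<close>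
definition minv :: "complex mat \<Rightarrow> complex mat" where
  "minv M = the (mat_inverse M)"

text \<open>Shifts alpha_1, alpha_2, ... are given by a function alpha :: nat => complex,
  used at indices 1, 2, ...; a_j = Re(alpha_j).\<close>
definition re_a :: "(nat \<Rightarrow> complex) \<Rightarrow> nat \<Rightarrow> complex" where
  "re_a \<alpha> j = complex_of_real (Re (\<alpha> j))"

definition Vmat :: "nat \<Rightarrow> complex mat \<Rightarrow> complex mat \<Rightarrow> (nat \<Rightarrow> complex) \<Rightarrow> nat \<Rightarrow> complex mat" where
  "Vmat n A C \<alpha> k = mat n k (\<lambda>(i, j).
      (minv (- mat_adjoint A + \<alpha> (j + 1) \<cdot>\<^sub>m 1\<^sub>m n) * mat_adjoint C) $$ (i, 0))"

definition Lam :: "(nat \<Rightarrow> complex) \<Rightarrow> nat \<Rightarrow> complex mat" where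
  "Lam \<alpha> k = mat_diag k (\<lambda>i. \<alpha> (i + 1))"

definition ones :: "nat \<Rightarrow> complex mat" where
  "ones k = mat k 1 (\<lambda>_. 1)"

definition Qmat :: "(nat \<Rightarrow> complex) \<Rightarrow> nat \<Rightarrow> complex mat" where
  "Qmat \<alpha> k = (1 / (- 2 * re_a \<alpha> k)) \<cdot>\<^sub>m
     four_block_mat (mat_diag (k - 1) (\<lambda>i. \<alpha> k - \<alpha> (i + 1))) (0\<^sub>m (k - 1) 1)
                    (mat 1 (k - 1) (\<lambda>_. 1)) (mat 1 1 (\<lambda>_. 1))"

definition Pinv :: "(nat \<Rightarrow> complex) \<Rightarrow> nat \<Rightarrow> complex mat" where
  "Pinv \<alpha> k =
     four_block_mat
       (mat_diag (k - 1) (\<lambda>i. (\<alpha> (i + 1) - \<alpha> k) / (\<alpha> (i + 1) + cnj (\<alpha> k))))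
       (0\<^sub>m (k - 1) 1)
       (mat 1 (k - 1) (\<lambda>(_, j). -1 / (\<alpha> (j + 1) + cnj (\<alpha> k))))
       (mat 1 1 (\<lambda>_. -1 / (2 * re_a \<alpha> k)))"

text \<open>The recursively defined matrices T_k (T 0 is an unused dummy).\<close>
fun Tmat :: "nat \<Rightarrow> complex mat \<Rightarrow> complex mat \<Rightarrow> complex mat \<Rightarrow> (nat \<Rightarrow> complex) \<Rightarrow> nat \<Rightarrow> complex mat" where
  "Tmat n A C F \<alpha> 0 = 0\<^sub>m 0 0"
| "Tmat n A C F \<alpha> (Suc 0) =
     (1 / (2 * re_a \<alpha> 1)) \<cdot>\<^sub>m
       (1\<^sub>m 1 + mat_adjoint (Vmat n A C \<alpha> 1) * F * Vmat n A C \<alpha> 1)"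
| "Tmat n A C F \<alpha> (Suc (Suc m)) =
     (let k = Suc (Suc m); V = Vmat n A C \<alpha> k; Qi = minv (Qmat \<alpha> k); Pi = Pinv \<alpha> k in
      mat_adjoint Pi *
        (four_block_mat (Tmat n A C F \<alpha> (Suc m)) (0\<^sub>m (k - 1) 1) (0\<^sub>m 1 (k - 1))
                        (mat 1 1 (\<lambda>_. 2 * re_a \<alpha> k))
         + (1 / (2 * re_a \<alpha> k)) \<cdot>\<^sub>m (mat_adjoint Qi * mat_adjoint V * F * V * Qi))
      * Pi)"

end

theory Submission
  imports Defs
begin


lemma adj_dims[simp]: "dim_row (mat_adjoint A) = dim_col A" "dim_col (mat_adjoint A) = dim_row A"
  unfolding mat_adjoint_def by auto
lemma adj_index[simp]: "i < dim_col A \<Longrightarrow> j < dim_row A \<Longrightarrow> mat_adjoint A $$ (i,j) = cnj (A $$ (j,i))"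
  unfolding mat_adjoint_def by (auto simp: mat_of_rows_def)
lemma adj_carrier: "A \<in> carrier_mat r c \<Longrightarrow> mat_adjoint A \<in> carrier_mat c r" by auto

definition spm :: "nat \<Rightarrow> (nat\<Rightarrow>complex) \<Rightarrow> (nat\<Rightarrow>complex) \<Rightarrow> complex mat" where
"spm N u w = mat (Suc N) (Suc N) (\<lambda>(p,j). (if p=j then u j else 0) + (if p=N then w j else 0))"

lemma spm_carrier[simp]: "spm N u w \<in> carrier_mat (Suc N) (Suc N)" unfolding spm_def by auto
lemma spm_dims[simp]: "dim_row (spm N u w) = Suc N" "dim_col (spm N u w) = Suc N" unfolding spm_def by auto

lemma mult_spm: assumes "M \<in> carrier_mat r (Suc N)" "i < r" "j \<le> N"
  shows "(M * spm N u w) $$ (i,j) = M$$(i,j)*u j + M$$(i,N)*w j"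
proof -
  have "(M * spm N u w) $$ (i,j) = (\<Sum>p<Suc N. M$$(i,p) * ((if p=j then u j else 0) + (if p=N then w j else 0)))"
    using assms by (auto simp: scalar_prod_def spm_def lessThan_atLeast0 intro!: sum.cong)
  also have "\<dots> = (\<Sum>p<Suc N. (if p=j then M$$(i,p) * u j else 0)) + (\<Sum>p<Suc N. (if p=N then M$$(i,p) * w j else 0))"
    by (subst sum.distrib[symmetric], rule sum.cong, auto simp: algebra_simps)
  also have "\<dots> = M$$(i,j)*u j + M$$(i,N)*w j" using assms by (simp add: sum.delta)
  finally show ?thesis .
qed

lemma adj_spm_mult: assumes "M \<in> carrier_mat (Suc N) c" "i \<le> N" "j < c"
  shows "(mat_adjoint (spm N u w) * M) $$ (i,j) = cnj (u i) * M$$(i,j) + cnj (w i) * M$$(N,j)"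
proof -
  have "(mat_adjoint (spm N u w) * M) $$ (i,j) = (\<Sum>p<Suc N. ((if i=p then cnj (u i) else 0) + (if p=N then cnj (w i) else 0)) * M$$(p,j))"
    using assms by (auto simp: scalar_prod_def spm_def lessThan_atLeast0 intro!: sum.cong)
  also have "\<dots> = (\<Sum>p<Suc N. (if p=i then cnj (u i) * M$$(p,j) else 0)) + (\<Sum>p<Suc N. (if p=N then cnj (w i) * M$$(p,j) else 0))"
    by (subst sum.distrib[symmetric], rule sum.cong, auto simp: algebra_simps)
  also have "\<dots> = cnj (u i) * M$$(i,j) + cnj (w i) * M$$(N,j)" using assms by (simp add: sum.delta)
  finally show ?thesis .
qed

lemma sandwich_spm: assumes "M \<in> carrier_mat (Suc N) (Suc N)" "i \<le> N" "j \<le> N"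
  shows "(mat_adjoint (spm N u w) * M * spm N u w) $$ (i,j) =
     cnj (u i) * (M$$(i,j)*u j + M$$(i,N)*w j) + cnj (w i) * (M$$(N,j)*u j + M$$(N,N)*w j)"
proof -
  have c: "mat_adjoint (spm N u w) * M \<in> carrier_mat (Suc N) (Suc N)" using assms by auto
  have e: "\<And>j. j \<le> N \<Longrightarrow> (mat_adjoint (spm N u w) * M) $$ (i,j) = cnj (u i) * M$$(i,j) + cnj (w i) * M$$(N,j)"
    using adj_spm_mult[OF assms(1)] assms by auto
  have "(mat_adjoint (spm N u w) * M * spm N u w) $$ (i,j) = 
    (mat_adjoint (spm N u w) * M) $$ (i,j) * u j + (mat_adjoint (spm N u w) * M) $$ (i,N) * w j"
    by (rule mult_spm[OF c]) (use assms in auto)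
  then show ?thesis
    using e[of j] e[of N] assms by (simp add: algebra_simps)
qed


lemma minv_unique: assumes A: "A \<in> carrier_mat n n" and B: "B \<in> carrier_mat n n" and BA: "B * A = 1\<^sub>m n"
  shows "minv A = B"
proof -
  have "det A \<noteq> 0" using arg_cong[OF BA, of det] det_mult[OF B A] by auto
  hence U: "A \<in> Units (ring_mat TYPE(complex) n ())" by (rule det_non_zero_imp_unit[OF A])
  obtain B' where S: "mat_inverse A = Some B'"
    using mat_inverse(1)[OF A, of "()"] U by (cases "mat_inverse A") auto
  from mat_inverse(2)[OF A S] have AB': "A * B' = 1\<^sub>m n" and B': "B' \<in> carrier_mat n n" by auto
  have "B = B * (A * B')" using B AB' by simp
  also have "\<dots> = (B * A) * B'" using A B B' by (simp add: assoc_mult_mat)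
  also have "\<dots> = B'" using BA B' by simp
  finally show ?thesis unfolding minv_def S by simp
qed



lemma alg_ij:
  fixes bi bj bN ci cN gij giN gNj gNN a2 :: complex
  assumes d1: "bj + cN \<noteq> 0" and d3: "ci + bN \<noteq> 0" and d5: "a2 \<noteq> 0" and a2: "a2 = bN + cN"
   and d7: "bN - bj \<noteq> 0" and d8: "cN - ci \<noteq> 0" and d9: "ci + bj \<noteq> 0"
  assumes Sij: "Sij = (1+gij)/(ci+bj) + a2 * (gij - giN - gNj + gNN)/((cN-ci)*(bN-bj))"
   and SiN: "SiN = a2*(giN-gNN)/(cN-ci)" and SNj: "SNj = a2*(gNj-gNN)/(bN-bj)" and SNN: "SNN = a2 + a2*gNN"
  shows "((ci - cN)/(ci+bN)) * (Sij*((bj - bN)/(bj+cN)) + SiN*(-1/(bj+cN))) + (-1/(ci+bN))*(SNj*((bj - bN)/(bj+cN)) + SNN*(-1/(bj+cN))) = (1+gij)/(ci+bj)"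
proof -
  let ?D = "(ci+bN)*(bj+cN)"
  have "((ci - cN)/(ci+bN)) * (Sij*((bj - bN)/(bj+cN)) + SiN*(-1/(bj+cN))) + (-1/(ci+bN))*(SNj*((bj - bN)/(bj+cN)) + SNN*(-1/(bj+cN)))
     = ((ci-cN)*(bj-bN)*Sij - (ci-cN)*SiN - (bj-bN)*SNj + SNN)/?D"
    using d1 d3 by (simp add: divide_simps) (simp add: algebra_simps)
  also have "(ci-cN)*(bj-bN)*Sij - (ci-cN)*SiN - (bj-bN)*SNj + SNN = (ci-cN)*(bj-bN)*(1+gij)/(ci+bj) + a2*(1+gij)"
  proof -
    have 1: "(ci-cN)*(bj-bN)*Sij = (ci-cN)*(bj-bN)*(1+gij)/(ci+bj) + a2 * (gij - giN - gNj + gNN)"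
    proof -
      have nz: "(cN-ci)*(bN-bj) \<noteq> 0" using d7 d8 by simp
      have e: "(ci-cN)*(bj-bN) = (cN-ci)*(bN-bj)" by (simp add: algebra_simps)
      have "(cN-ci)*(bN-bj) * (a2 * (gij - giN - gNj + gNN)/((cN-ci)*(bN-bj))) = a2 * (gij - giN - gNj + gNN)"
        using nz by simp
      then show ?thesis unfolding Sij e by (simp add: distrib_left)
    qed
    have 2: "(ci-cN)*SiN = - a2*(giN-gNN)" unfolding SiN using d8 by (simp add: field_simps)
    have 3: "(bj-bN)*SNj = - a2*(gNj-gNN)" unfolding SNj using d7 by (simp add: field_simps)
    show ?thesis unfolding 1 2 3 SNN by (simp add: algebra_simps)
  qed
  also have "\<dots> = (1+gij) * ((ci-cN)*(bj-bN) + a2*(ci+bj))/(ci+bj)"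
    using d9 by (simp add: field_simps)
  also have "(ci-cN)*(bj-bN) + a2*(ci+bj) = ?D" unfolding a2 by (simp add: algebra_simps)
  finally show ?thesis using d1 d3 by simp
qed

lemma alg_iN:
  fixes bN ci cN giN gNN a2 :: complex
  assumes d3: "ci + bN \<noteq> 0" and d5: "a2 \<noteq> 0" and d8: "cN - ci \<noteq> 0"
  shows "((ci - cN)/(ci+bN)) * ((a2*(giN-gNN)/(cN-ci))*(-1/a2)) + (-1/(ci+bN))*((a2 + a2*gNN)*(-1/a2)) = (1+giN)/(ci+bN)"
proof -
  have "((ci - cN)/(ci+bN)) * ((a2*(giN-gNN)/(cN-ci))*(-1/a2)) = (giN-gNN)/(ci+bN)"
    using d3 d5 d8 by (simp add: divide_simps) (simp add: algebra_simps)
  moreover have "(-1/(ci+bN))*((a2 + a2*gNN)*(-1/a2)) = (1+gNN)/(ci+bN)"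
    using d3 d5 by (simp add: divide_simps) (simp add: algebra_simps)
  ultimately show ?thesis by (simp add: add_divide_distrib[symmetric])
qed

lemma alg_Nj:
  fixes bN bj cN gNj gNN a2 :: complex
  assumes d1: "bj + cN \<noteq> 0" and d5: "a2 \<noteq> 0" and d7: "bN - bj \<noteq> 0"
  shows "(-1/a2) * ((a2*(gNj-gNN)/(bN-bj))*((bj - bN)/(bj+cN)) + (a2 + a2*gNN)*(-1/(bj+cN))) = (1+gNj)/(cN+bj)"
proof -
  have "(a2*(gNj-gNN)/(bN-bj))*((bj - bN)/(bj+cN)) = - a2*(gNj-gNN)/(bj+cN)"
    using d1 d7 by (simp add: divide_simps) (simp add: algebra_simps)
  moreover have "(a2 + a2*gNN)*(-1/(bj+cN)) = - a2*(1+gNN)/(bj+cN)"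
    using d1 by (simp add: divide_simps) (simp add: algebra_simps)
  ultimately show ?thesis using d1 d5 d7 by (simp add: divide_simps) (simp add: algebra_simps)
qed

lemma alg_NN:
  fixes bN cN gNN a2 :: complex
  assumes d5: "a2 \<noteq> 0" and a2: "a2 = bN + cN"
  shows "(-1/a2) * ((a2 + a2*gNN)*(-1/a2)) = (1+gNN)/(cN+bN)"
  using d5 unfolding a2[symmetric] add.commute[of cN] by (simp add: divide_simps) (simp add: algebra_simps)

lemma step_entry:
  fixes \<beta> :: "nat \<Rightarrow> complex" and N :: nat and g :: "nat \<Rightarrow> nat \<Rightarrow> complex"
  assumes Tp: "Tp \<in> carrier_mat N N"
    and Tpe: "\<And>i j. i < N \<Longrightarrow> j < N \<Longrightarrow> Tp $$ (i,j) = (1 + g i j)/(cnj (\<beta> i) + \<beta> j)"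
    and G: "G \<in> carrier_mat (Suc N) (Suc N)"
    and Ge: "\<And>i j. i \<le> N \<Longrightarrow> j \<le> N \<Longrightarrow> G $$ (i,j) = g i j"
    and dist: "\<And>i. i < N \<Longrightarrow> \<beta> i \<noteq> \<beta> N"
    and pos: "\<And>i. i \<le> N \<Longrightarrow> Re (\<beta> i) > 0"
    and a2: "a2 = \<beta> N + cnj (\<beta> N)"
    and x: "x = (\<lambda>p. if p < N then -a2/(\<beta> N - \<beta> p) else 0)"
    and y: "y = (\<lambda>p. if p < N then a2/(\<beta> N - \<beta> p) else -a2)"
    and u: "u = (\<lambda>p. if p < N then (\<beta> p - \<beta> N)/(\<beta> p + cnj (\<beta> N)) else 0)"
    and w: "w = (\<lambda>p. if p < N then -1/(\<beta> p + cnj (\<beta> N)) else -1/a2)"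
    and i: "i \<le> N" and j: "j \<le> N"
  shows "(mat_adjoint (spm N u w) * (four_block_mat Tp (0\<^sub>m N 1) (0\<^sub>m 1 N) (mat 1 1 (\<lambda>_. a2))
           + (1/a2) \<cdot>\<^sub>m (mat_adjoint (spm N x y) * G * spm N x y)) * spm N u w) $$ (i,j)
         = (1 + g i j)/(cnj (\<beta> i) + \<beta> j)"
proof -
  define W where "W = mat_adjoint (spm N x y) * G * spm N x y"
  define S where "S = four_block_mat Tp (0\<^sub>m N 1) (0\<^sub>m 1 N) (mat 1 1 (\<lambda>_. a2)) + (1/a2) \<cdot>\<^sub>m W"
  have Wc: "W \<in> carrier_mat (Suc N) (Suc N)" unfolding W_def using G by auto
  have Sc: "S \<in> carrier_mat (Suc N) (Suc N)" unfolding S_def using Wc Tp by auto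
  have We: "W $$ (p,q) = cnj (x p) * (g p q * x q + g p N * y q) + cnj (y p) * (g N q * x q + g N N * y q)"
    if "p \<le> N" "q \<le> N" for p q
    unfolding W_def sandwich_spm[OF G that] using that by (simp add: Ge)
  have Se: "S $$ (p,q) = (if p < N then (if q < N then Tp $$ (p,q) else 0) else (if q < N then 0 else a2))
     + (1/a2) * W $$ (p,q)" if "p \<le> N" "q \<le> N" for p q
    unfolding S_def using that Wc Tp by (auto simp: less_Suc_eq_le)
  have "(mat_adjoint (spm N u w) * S * spm N u w) $$ (i,j) = 
     cnj (u i) * (S$$(i,j)*u j + S$$(i,N)*w j) + cnj (w i) * (S$$(N,j)*u j + S$$(N,N)*w j)"
    by (rule sandwich_spm[OF Sc i j])
  also have "\<dots> = (1 + g i j)/(cnj (\<beta> i) + \<beta> j)"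
  proof -
    have ca2: "cnj a2 = a2" unfolding a2 by (simp add: add.commute)
    have nz1: "cnj (\<beta> p) + \<beta> q \<noteq> 0" if "p \<le> N" "q \<le> N" for p q
    proof
      assume "cnj (\<beta> p) + \<beta> q = 0"
      hence "Re (cnj (\<beta> p) + \<beta> q) = 0" by simp
      thus False using pos[OF that(1)] pos[OF that(2)] by simp
    qed
    have nz2: "\<beta> p + cnj (\<beta> q) \<noteq> 0" if "p \<le> N" "q \<le> N" for p q
      using nz1[OF that(2) that(1)] by (simp add: add.commute)
    have a2nz: "a2 \<noteq> 0" using nz2[of N N] unfolding a2 by simp
    have d1: "\<beta> N - \<beta> p \<noteq> 0" if "p < N" for p using dist[OF that] by simp
    have d2: "cnj (\<beta> N) - cnj (\<beta> p) \<noteq> 0" if "p < N" for p using dist[OF that] by simp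
    have xN: "x N = 0" "y N = -a2" "u N = 0" "w N = -1/a2" unfolding x y u w by auto
    have cxN: "cnj (x N) = 0" "cnj (y N) = -a2" "cnj (w N) = -1/a2" unfolding x y w using ca2 by auto
    have xp: "x p = -a2/(\<beta> N - \<beta> p)" "y p = a2/(\<beta> N - \<beta> p)"
      "u p = (\<beta> p - \<beta> N)/(\<beta> p + cnj (\<beta> N))" "w p = -1/(\<beta> p + cnj (\<beta> N))"
      "cnj (x p) = -a2/(cnj (\<beta> N) - cnj (\<beta> p))" "cnj (y p) = a2/(cnj (\<beta> N) - cnj (\<beta> p))"
      "cnj (u p) = (cnj (\<beta> p) - cnj (\<beta> N))/(cnj (\<beta> p) + \<beta> N)" "cnj (w p) = -1/(cnj (\<beta> p) + \<beta> N)"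
      if "p < N" for p
      unfolding x y u w using that ca2 by auto
    have SNN: "S$$(N,N) = a2 + a2 * g N N"
      unfolding Se[OF order.refl order.refl] We[OF order.refl order.refl] cxN xN using a2nz ca2
      by (simp add: divide_simps)
    have SiN: "S$$(p,N) = a2*(g p N - g N N)/(cnj (\<beta> N) - cnj (\<beta> p))" if "p < N" for p
      unfolding Se[OF less_imp_le[OF that] order.refl] We[OF less_imp_le[OF that] order.refl] xp[OF that] xN
      using a2nz ca2 d2[OF that] that by (simp add: divide_simps) (simp add: algebra_simps)
    have SNj: "S$$(N,q) = a2*(g N q - g N N)/(\<beta> N - \<beta> q)" if "q < N" for q
      unfolding Se[OF order.refl less_imp_le[OF that]] We[OF order.refl less_imp_le[OF that]] xp[OF that] cxN
      using a2nz ca2 d1[OF that] that by (simp add: divide_simps) (simp add: algebra_simps)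
    have Sij: "S$$(p,q) = (1+g p q)/(cnj (\<beta> p) + \<beta> q) + a2 * (g p q - g p N - g N q + g N N)/((cnj (\<beta> N) - cnj (\<beta> p))*(\<beta> N - \<beta> q))"
      if "p < N" "q < N" for p q
    proof -
      have "(1/a2) * W$$(p,q) = a2 * (g p q - g p N - g N q + g N N)/((cnj (\<beta> N) - cnj (\<beta> p))*(\<beta> N - \<beta> q))"
        unfolding We[OF less_imp_le[OF that(1)] less_imp_le[OF that(2)]] xp[OF that(1)] xp[OF that(2)]
        using a2nz ca2 d1[OF that(2)] d2[OF that(1)] by (simp add: divide_simps) (simp add: algebra_simps)
      thus ?thesis unfolding Se[OF less_imp_le[OF that(1)] less_imp_le[OF that(2)]] using that Tpe by simp
    qed
    show ?thesis
    proof (cases "i < N")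
      case iN: True
      show ?thesis
      proof (cases "j < N")
        case jN: True
        show ?thesis unfolding xp(7,8)[OF iN] xp(3,4)[OF jN] Sij[OF iN jN] SiN[OF iN] SNj[OF jN] SNN
          by (rule alg_ij) (use nz1 nz2 a2nz d1 d2 iN jN a2 in auto)
      next
        case False
        hence jj: "j = N" using j by simp
        show ?thesis unfolding jj xp(7,8)[OF iN] xN SiN[OF iN] SNN
          using alg_iN[OF nz1[OF less_imp_le[OF iN] order.refl] a2nz d2[OF iN], of "g i N" "g N N"]
          by simp
      qed
    next
      case False
      hence ii: "i = N" using i by simp
      show ?thesis
      proof (cases "j < N")
        case jN: True
        show ?thesis unfolding ii cxN xN xp(3,4)[OF jN] SNj[OF jN] SNN
          using alg_Nj[OF nz2[OF less_imp_le[OF jN] order.refl] a2nz d1[OF jN], of "g N j" "g N N"]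
          using ca2 by simp
      next
        case False
        hence jj: "j = N" using j by simp
        show ?thesis unfolding ii jj cxN xN SNN
          using alg_NN[OF a2nz a2, of "g N N"] using ca2 by simp
      qed
    qed
  qed
  finally show ?thesis unfolding S_def W_def .
qed



definition vv :: "nat \<Rightarrow> complex mat \<Rightarrow> complex mat \<Rightarrow> (nat \<Rightarrow> complex) \<Rightarrow> nat \<Rightarrow> nat \<Rightarrow> complex" where
  "vv n A C \<alpha> p j = (minv (- mat_adjoint A + \<alpha> (j + 1) \<cdot>\<^sub>m 1\<^sub>m n) * mat_adjoint C) $$ (p, 0)"

definition gg where "gg n A C F \<alpha> i j = (\<Sum>p<n. (\<Sum>q<n. cnj (vv n A C \<alpha> q i) * F$$(q,p)) * vv n A C \<alpha> p j)"

lemma Vmat_carrier[simp]: "Vmat n A C \<alpha> k \<in> carrier_mat n k" unfolding Vmat_def by auto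

lemma G_index: assumes F: "F \<in> carrier_mat n n" and "i < k" "j < k"
  shows "(mat_adjoint (Vmat n A C \<alpha> k) * F * Vmat n A C \<alpha> k) $$ (i,j) = gg n A C F \<alpha> i j"
  using assms unfolding gg_def
  by (auto simp: scalar_prod_def Vmat_def vv_def lessThan_atLeast0 intro!: sum.cong)

lemma re_a2: "2 * re_a \<alpha> k = \<alpha> k + cnj (\<alpha> k)"
  unfolding re_a_def using complex_add_cnj[of "\<alpha> k"] by simp

lemma Qmat_spm: "Qmat \<alpha> (Suc (Suc m)) = spm (Suc m) (\<lambda>j. (1 / (- 2 * re_a \<alpha> (Suc (Suc m)))) * (\<alpha> (Suc (Suc m)) - \<alpha> (j+1)))
   (\<lambda>j. 1 / (- 2 * re_a \<alpha> (Suc (Suc m))))"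
  unfolding Qmat_def spm_def
  by (rule eq_matI) (auto simp: mat_diag_def)

lemma Pinv_spm: "Pinv \<alpha> (Suc (Suc m)) = spm (Suc m)
   (\<lambda>p. if p < Suc m then (\<alpha> (p+1) - \<alpha> (Suc (Suc m)))/(\<alpha> (p+1) + cnj (\<alpha> (Suc (Suc m)))) else 0)
   (\<lambda>p. if p < Suc m then -1/(\<alpha> (p+1) + cnj (\<alpha> (Suc (Suc m)))) else -1/(2 * re_a \<alpha> (Suc (Suc m))))"
  unfolding Pinv_def spm_def
  by (rule eq_matI) (auto simp: mat_diag_def)



lemma Qinv: assumes a2nz: "re_a \<alpha> (Suc (Suc m)) \<noteq> 0"
  and dist: "\<And>j. j < Suc m \<Longrightarrow> \<alpha> (j+1) \<noteq> \<alpha> (Suc (Suc m))"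
  shows "minv (Qmat \<alpha> (Suc (Suc m))) = spm (Suc m)
     (\<lambda>p. if p < Suc m then -(2 * re_a \<alpha> (Suc (Suc m)))/(\<alpha> (Suc (Suc m)) - \<alpha> (p+1)) else 0)
     (\<lambda>p. if p < Suc m then (2 * re_a \<alpha> (Suc (Suc m)))/(\<alpha> (Suc (Suc m)) - \<alpha> (p+1)) else -(2 * re_a \<alpha> (Suc (Suc m))))"
  (is "_ = ?X")
proof (rule minv_unique)
  show "Qmat \<alpha> (Suc (Suc m)) \<in> carrier_mat (Suc (Suc m)) (Suc (Suc m))" unfolding Qmat_spm by simp
  show "?X \<in> carrier_mat (Suc (Suc m)) (Suc (Suc m))" by simp
  show "?X * Qmat \<alpha> (Suc (Suc m)) = 1\<^sub>m (Suc (Suc m))"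
  proof (rule eq_matI)
    fix i j assume i: "i < dim_row (1\<^sub>m (Suc (Suc m)))" and j: "j < dim_col (1\<^sub>m (Suc (Suc m)))"
    have "(?X * Qmat \<alpha> (Suc (Suc m))) $$ (i,j) = ?X $$ (i,j) * ((1 / (- 2 * re_a \<alpha> (Suc (Suc m)))) * (\<alpha> (Suc (Suc m)) - \<alpha> (j+1)))
        + ?X $$ (i, Suc m) * (1 / (- 2 * re_a \<alpha> (Suc (Suc m))))"
      unfolding Qmat_spm by (rule mult_spm) (use i j in auto)
    also have "\<dots> = 1\<^sub>m (Suc (Suc m)) $$ (i,j)"
      using i j a2nz dist[of j] unfolding spm_def
      by (auto simp: less_Suc_eq)
    finally show "(?X * Qmat \<alpha> (Suc (Suc m))) $$ (i,j) = 1\<^sub>m (Suc (Suc m)) $$ (i,j)" .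
  qed (auto simp: Qmat_spm)
qed



lemma T_ind:
  assumes F: "F \<in> carrier_mat n n" and dist: "inj_on \<alpha> {1..}"
    and pos: "\<And>j. j \<ge> 1 \<Longrightarrow> Re (\<alpha> j) > 0"
  shows "Tmat n A C F \<alpha> (Suc m) \<in> carrier_mat (Suc m) (Suc m) \<and>
    (\<forall>i<Suc m. \<forall>j<Suc m. Tmat n A C F \<alpha> (Suc m) $$ (i,j) = (1 + gg n A C F \<alpha> i j)/(cnj (\<alpha> (i+1)) + \<alpha> (j+1)))"
proof (induction m)
  case 0
  have G: "(mat_adjoint (Vmat n A C \<alpha> 1) * F * Vmat n A C \<alpha> 1) $$ (0,0) = gg n A C F \<alpha> 0 0"
    by (rule G_index[OF F]) auto
  have c: "mat_adjoint (Vmat n A C \<alpha> 1) * F * Vmat n A C \<alpha> 1 \<in> carrier_mat 1 1"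
    using F Vmat_carrier[of n A C \<alpha> 1] by (intro mult_carrier_mat[of _ _ n] adj_carrier) auto
  show ?case using G c re_a2[of \<alpha> 1]
    by (auto simp: add.commute)
next
  case (Suc m)
  define k where "k = Suc (Suc m)"
  define N where "N = Suc m"
  define V where "V = Vmat n A C \<alpha> k"
  define G where "G = mat_adjoint V * F * V"
  define a2 where "a2 = 2 * re_a \<alpha> k"
  define Qi where "Qi = minv (Qmat \<alpha> k)"
  define Pi where "Pi = Pinv \<alpha> k"
  define Tp where "Tp = Tmat n A C F \<alpha> (Suc m)"
  have Vc: "V \<in> carrier_mat n k" unfolding V_def by simp
  have Gc: "G \<in> carrier_mat (Suc N) (Suc N)" unfolding G_def N_def using Vc F unfolding k_def by (intro mult_carrier_mat[of _ _ n] adj_carrier) auto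
  have k1: "\<alpha> (j+1) \<noteq> \<alpha> k" if "j < Suc m" for j
    using inj_onD[OF dist, of "j+1" k] that unfolding k_def by auto
  have a2nz: "re_a \<alpha> k \<noteq> 0" using pos[of k] unfolding re_a_def k_def by auto
  have QiE: "Qi = spm N
     (\<lambda>p. if p < Suc m then -a2/(\<alpha> k - \<alpha> (p+1)) else 0)
     (\<lambda>p. if p < Suc m then a2/(\<alpha> k - \<alpha> (p+1)) else -a2)"
    unfolding Qi_def a2_def N_def k_def by (rule Qinv) (use a2nz k1 in \<open>auto simp: k_def\<close>)
  have PiE: "Pi = spm N
   (\<lambda>p. if p < Suc m then (\<alpha> (p+1) - \<alpha> k)/(\<alpha> (p+1) + cnj (\<alpha> k)) else 0)
   (\<lambda>p. if p < Suc m then -1/(\<alpha> (p+1) + cnj (\<alpha> k)) else -1/a2)"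
    unfolding Pi_def a2_def N_def k_def by (rule Pinv_spm)
  have Qic: "Qi \<in> carrier_mat k k" unfolding QiE N_def k_def by simp
  have assoc: "mat_adjoint Qi * mat_adjoint V * F * V * Qi = mat_adjoint Qi * G * Qi"
  proof -
    have "mat_adjoint Qi * mat_adjoint V * F = mat_adjoint Qi * (mat_adjoint V * F)"
      by (rule assoc_mult_mat[of _ k k _ n _ n]) (use Qic Vc F in auto)
    hence "mat_adjoint Qi * mat_adjoint V * F * V = mat_adjoint Qi * (mat_adjoint V * F) * V" by simp
    also have "\<dots> = mat_adjoint Qi * (mat_adjoint V * F * V)"
      by (rule assoc_mult_mat[of _ k k _ n _ k]) (use Qic Vc F in auto)
    finally show ?thesis unfolding G_def by simp
  qed
  have TE: "Tmat n A C F \<alpha> (Suc (Suc m)) = mat_adjoint Pi * (four_block_mat Tp (0\<^sub>m N 1) (0\<^sub>m 1 N) (mat 1 1 (\<lambda>_. a2))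
           + (1/a2) \<cdot>\<^sub>m (mat_adjoint Qi * G * Qi)) * Pi"
    unfolding assoc[symmetric] by (simp add: Let_def k_def N_def V_def Qi_def Pi_def a2_def Tp_def)
  have Tpc: "Tp \<in> carrier_mat N N" and Tpe: "\<And>i j. i < N \<Longrightarrow> j < N \<Longrightarrow> Tp $$ (i,j) = (1 + gg n A C F \<alpha> i j)/(cnj (\<alpha> (i+1)) + \<alpha> (j+1))"
    using Suc.IH unfolding Tp_def N_def by auto
  have entries: "Tmat n A C F \<alpha> (Suc (Suc m)) $$ (i,j) = (1 + gg n A C F \<alpha> i j)/(cnj (\<alpha> (i+1)) + \<alpha> (j+1))"
    if "i \<le> N" "j \<le> N" for i j
    unfolding TE QiE PiE
  proof (rule step_entry[where \<beta> = "\<lambda>i. \<alpha> (i+1)", OF Tpc _ Gc _ _ _ _ _ _ _ _ that])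
    show "\<And>i j. i < N \<Longrightarrow> j < N \<Longrightarrow> Tp $$ (i,j) = (1 + gg n A C F \<alpha> i j)/(cnj (\<alpha> (i+1)) + \<alpha> (j+1))"
      by (rule Tpe)
    show "\<And>i j. i \<le> N \<Longrightarrow> j \<le> N \<Longrightarrow> G $$ (i,j) = gg n A C F \<alpha> i j"
      unfolding G_def V_def by (rule G_index[OF F]) (auto simp: N_def k_def)
    show "\<And>i. i < N \<Longrightarrow> \<alpha> (i+1) \<noteq> \<alpha> (N+1)" using k1 unfolding N_def k_def by auto
    show "\<And>i. i \<le> N \<Longrightarrow> Re (\<alpha> (i+1)) > 0" using pos by auto
    show "a2 = \<alpha> (N+1) + cnj (\<alpha> (N+1))" unfolding a2_def re_a2 N_def k_def by simp
  qed (auto simp: N_def k_def fun_eq_iff)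
  have Tc: "Tmat n A C F \<alpha> (Suc (Suc m)) \<in> carrier_mat (Suc (Suc m)) (Suc (Suc m))"
    unfolding TE QiE PiE using Gc Tpc by (auto simp: N_def)
  show ?case using Tc entries by (auto simp: N_def less_Suc_eq_le)
qed



lemma adj_Lam: "mat_adjoint (Lam \<alpha> k) = mat_diag k (\<lambda>i. cnj (\<alpha> (i+1)))"
  unfolding Lam_def by (rule eq_matI) (auto simp: mat_diag_def)

theorem proposition6p1:
  fixes n :: nat and A C F :: "complex mat" and \<alpha> :: "nat \<Rightarrow> complex"
  assumes A: "A \<in> carrier_mat n n"
    and C: "C \<in> carrier_mat 1 n"
    and F: "F \<in> carrier_mat n n"
    and herm: "mat_adjoint F = F"
    and dist: "inj_on \<alpha> {1..}"
    and pos: "\<And>j. j \<ge> 1 \<Longrightarrow> Re (\<alpha> j) > 0"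
    and nonsing: "\<And>j. j \<ge> 1 \<Longrightarrow> invertible_mat (- mat_adjoint A + \<alpha> j \<cdot>\<^sub>m 1\<^sub>m n)"
    and k: "k \<ge> 1"
  shows "mat_adjoint (Lam \<alpha> k) * Tmat n A C F \<alpha> k + Tmat n A C F \<alpha> k * Lam \<alpha> k
           - mat_adjoint (Vmat n A C \<alpha> k) * F * Vmat n A C \<alpha> k
           - ones k * mat_adjoint (ones k) = 0\<^sub>m k k
       \<and> (\<forall>i j. 1 \<le> i \<and> i \<le> k \<and> 1 \<le> j \<and> j \<le> k \<longrightarrow>
            Tmat n A C F \<alpha> k $$ (i - 1, j - 1) =
              (1 + (mat_adjoint (Vmat n A C \<alpha> k) * F * Vmat n A C \<alpha> k) $$ (i - 1, j - 1))
              / (cnj (\<alpha> i) + \<alpha> j))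
       \<and> (k \<ge> 2 \<longrightarrow>
            mat (k - 1) (k - 1) (\<lambda>(i, j). Tmat n A C F \<alpha> k $$ (i, j)) = Tmat n A C F \<alpha> (k - 1))"
proof -
  obtain m where km: "k = Suc m" using k by (cases k) auto
  note TI = T_ind[OF F dist pos, where m = m and A = A and C = C]
  have Tc: "Tmat n A C F \<alpha> k \<in> carrier_mat k k" using TI km by simp
  have Te: "Tmat n A C F \<alpha> k $$ (i,j) = (1 + gg n A C F \<alpha> i j)/(cnj (\<alpha> (i+1)) + \<alpha> (j+1))"
    if "i < k" "j < k" for i j using TI km that by simp
  have Ge: "(mat_adjoint (Vmat n A C \<alpha> k) * F * Vmat n A C \<alpha> k) $$ (i,j) = gg n A C F \<alpha> i j"
    if "i < k" "j < k" for i j by (rule G_index[OF F that])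
  have Gc: "mat_adjoint (Vmat n A C \<alpha> k) * F * Vmat n A C \<alpha> k \<in> carrier_mat k k"
    using F Vmat_carrier[of n A C \<alpha> k] by (intro mult_carrier_mat[of _ _ n] adj_carrier) auto
  have nz: "cnj (\<alpha> (i+1)) + \<alpha> (j+1) \<noteq> 0" for i j
  proof
    assume "cnj (\<alpha> (i+1)) + \<alpha> (j+1) = 0"
    hence "Re (cnj (\<alpha> (i+1)) + \<alpha> (j+1)) = 0" by simp
    thus False using pos[of "i+1"] pos[of "j+1"] by simp
  qed
  have P1: "mat_adjoint (Lam \<alpha> k) * Tmat n A C F \<alpha> k + Tmat n A C F \<alpha> k * Lam \<alpha> k
           - mat_adjoint (Vmat n A C \<alpha> k) * F * Vmat n A C \<alpha> k
           - ones k * mat_adjoint (ones k) = 0\<^sub>m k k"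
  proof (rule eq_matI)
    fix i j assume i: "i < dim_row (0\<^sub>m k k :: complex mat)" and j: "j < dim_col (0\<^sub>m k k :: complex mat)"
    hence i: "i < k" and j: "j < k" by auto
    have L: "mat_adjoint (Lam \<alpha> k) * Tmat n A C F \<alpha> k = mat k k (\<lambda>(i,j). cnj (\<alpha> (i+1)) * Tmat n A C F \<alpha> k $$ (i,j))"
      unfolding adj_Lam by (rule mat_diag_mult_left[OF Tc])
    have R: "Tmat n A C F \<alpha> k * Lam \<alpha> k = mat k k (\<lambda>(i,j). Tmat n A C F \<alpha> k $$ (i,j) * \<alpha> (j+1))"
      unfolding Lam_def by (rule mat_diag_mult_right[OF Tc])
    have O: "(ones k * mat_adjoint (ones k)) $$ (i,j) = 1" using i j
      by (simp add: ones_def scalar_prod_def)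
    have Oc: "ones k * mat_adjoint (ones k) \<in> carrier_mat k k" unfolding ones_def by auto
    have "(cnj (\<alpha> (i+1)) * Tmat n A C F \<alpha> k $$ (i,j) + Tmat n A C F \<alpha> k $$ (i,j) * \<alpha> (j+1))
         - gg n A C F \<alpha> i j - 1 = 0"
      unfolding Te[OF i j] using nz[of i j] by (simp add: divide_simps) (simp add: algebra_simps)
    then show "(mat_adjoint (Lam \<alpha> k) * Tmat n A C F \<alpha> k + Tmat n A C F \<alpha> k * Lam \<alpha> k
           - mat_adjoint (Vmat n A C \<alpha> k) * F * Vmat n A C \<alpha> k
           - ones k * mat_adjoint (ones k)) $$ (i,j) = 0\<^sub>m k k $$ (i,j)"
      unfolding L R using i j carrier_matD[OF Gc] carrier_matD[OF Oc] O Ge[OF i j] by simp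
  qed (use Gc in \<open>auto simp: ones_def\<close>)
  have P2: "\<forall>i j. 1 \<le> i \<and> i \<le> k \<and> 1 \<le> j \<and> j \<le> k \<longrightarrow>
            Tmat n A C F \<alpha> k $$ (i - 1, j - 1) =
              (1 + (mat_adjoint (Vmat n A C \<alpha> k) * F * Vmat n A C \<alpha> k) $$ (i - 1, j - 1))
              / (cnj (\<alpha> i) + \<alpha> j)"
  proof (intro allI impI)
    fix i j assume h: "1 \<le> i \<and> i \<le> k \<and> 1 \<le> j \<and> j \<le> k"
    show "Tmat n A C F \<alpha> k $$ (i - 1, j - 1) =
              (1 + (mat_adjoint (Vmat n A C \<alpha> k) * F * Vmat n A C \<alpha> k) $$ (i - 1, j - 1))
              / (cnj (\<alpha> i) + \<alpha> j)"
    proof -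
      have l: "i - 1 < k" "j - 1 < k" using h by auto
      have "i - 1 + 1 = i" "j - 1 + 1 = j" using h by auto
      then show ?thesis using Te[OF l] Ge[OF l] by simp
    qed
  qed
  have P3: "k \<ge> 2 \<longrightarrow>
            mat (k - 1) (k - 1) (\<lambda>(i, j). Tmat n A C F \<alpha> k $$ (i, j)) = Tmat n A C F \<alpha> (k - 1)"
  proof
    assume k2: "k \<ge> 2"
    then obtain m' where m': "k - 1 = Suc m'" by (cases "k - 1") auto
    note TI' = T_ind[OF F dist pos, where m = m' and A = A and C = C]
    show "mat (k - 1) (k - 1) (\<lambda>(i, j). Tmat n A C F \<alpha> k $$ (i, j)) = Tmat n A C F \<alpha> (k - 1)"
      by (rule eq_matI) (use TI' m' Te in auto)
  qed
  show ?thesis using P1 P2 P3 by blast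
qed

end
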